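(* Let $(A,\to,1)$ be any algebra of type $(2,0)$. Then the following implications hold: (0) (Re) implies (S); (00) (M) implies (N); (1) (L) and (An) imply (N); (2) (K) and (An) imply (N); (3) (C) and (An) imply (Ex); (3') (Ex) and (Re) imply (C); (4) (Re) and (Ex) imply (D); (5) (Re), (Ex) and (An) imply (M); (5') (Re), (Ex) and (An) imply (N); (6) (Re) and (K) imply (L); (7) (N) and (K) imply (L); (7') (M) and (K) imply (L); (8) (Re), (L) and (Ex) imply (K); (9) (M), (L) and (B) imply (K); (9') (M), (L) and ( ** ) imply (K); (10) if (Ex) holds, then (B) holds if and only if (BB) holds; (10') (Ex) and (B) imply (BB); (10'') (Ex) and (BB) imply (B); (11) (Re), (Ex) and ( * ) imply (BB); (12) (N) and (B) imply ( * ); (12') (M) and (B) imply ( * ); (13) (N) and ( * ) imply (Tr); (13') (M) and ( * ) imply (Tr); (14) (N) and (B) imply (Tr); (14') (M) and (B) imply (Tr); (15) (N) and (BB) imply ( ** ); (15') (M) and (BB) imply ( ** ); (16) (N) and ( ** ) imply (Tr); (16') (M) and ( ** ) imply (Tr); (17) (N) and (BB) imply (Tr); (17') (M) and (BB) imply (Tr); (18) (M) and (BB) imply (Re); (18') (M) and (BB) imply (D); (19) (M) and (B) imply (Re); (20) (BB), (D) and (N) imply (C); (20') (M) and (BB) imply (C); (21) (BB), (D), (N) and (An) imply (Ex); (21') (BB), (D), (L) and (An) imply (Ex); (21'') (M), (BB) and (An) imply (Ex); (22) (B), (C), (K) and (An) imply (Re); (23) (BB), (D), (Re) and (An) imply (N);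 (24) (Re), (Ex) and (Tr) imply ( ** ).
   Context: An algebra $(A,\to,1)$ of type $(2,0)$ is a set $A$ with a binary operation $\to$ and a constant $1\in A$. The following properties are considered, each required for all $x,y,z\in A$: (An) $x\to y=1$ and $y\to x=1$ imply $x=y$; (B) $(y\to z)\to((x\to y)\to(x\to z))=1$; (BB) $(y\to z)\to((z\to x)\to(y\to x))=1$; ( * ) $y\to z=1$ implies $(x\to y)\to(x\to z)=1$; ( ** ) $y\to z=1$ implies $(z\to x)\to(y\to x)=1$; (C) $(x\to(y\to z))\to(y\to(x\to z))=1$; (D) $y\to((y\to x)\to x)=1$; (Ex) $x\to(y\to z)=y\to(x\to z)$; (K) $x\to(y\to x)=1$; (L) $x\to 1=1$; (M) $1\to x=x$; (N) $1\to x=1$ implies $x=1$; (Re) $x\to x=1$; (S) $x=y$ implies $x\to y=1$; (Tr) $x\to y=1$ and $y\to z=1$ imply $x\to z=1$. *)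

theory Defs
  imports Main
begin

definition pAn :: "('a \<Rightarrow> 'a \<Rightarrow> 'a) \<Rightarrow> 'a \<Rightarrow> bool" where
  "pAn imp one \<longleftrightarrow> (\<forall>x y. imp x y = one \<and> imp y x = one \<longrightarrow> x = y)"
definition pB :: "('a \<Rightarrow> 'a \<Rightarrow> 'a) \<Rightarrow> 'a \<Rightarrow> bool" where
  "pB imp one \<longleftrightarrow> (\<forall>x y z. imp (imp y z) (imp (imp x y) (imp x z)) = one)"
definition pBB :: "('a \<Rightarrow> 'a \<Rightarrow> 'a) \<Rightarrow> 'a \<Rightarrow> bool" where
  "pBB imp one \<longleftrightarrow> (\<forall>x y z. imp (imp y z) (imp (imp z x) (imp y x)) = one)"
definition pStar :: "('a \<Rightarrow> 'a \<Rightarrow> 'a) \<Rightarrow> 'a \<Rightarrow> bool" where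
  "pStar imp one \<longleftrightarrow> (\<forall>x y z. imp y z = one \<longrightarrow> imp (imp x y) (imp x z) = one)"
definition pStarStar :: "('a \<Rightarrow> 'a \<Rightarrow> 'a) \<Rightarrow> 'a \<Rightarrow> bool" where
  "pStarStar imp one \<longleftrightarrow> (\<forall>x y z. imp y z = one \<longrightarrow> imp (imp z x) (imp y x) = one)"
definition pC :: "('a \<Rightarrow> 'a \<Rightarrow> 'a) \<Rightarrow> 'a \<Rightarrow> bool" where
  "pC imp one \<longleftrightarrow> (\<forall>x y z. imp (imp x (imp y z)) (imp y (imp x z)) = one)"
definition pD :: "('a \<Rightarrow> 'a \<Rightarrow> 'a) \<Rightarrow> 'a \<Rightarrow> bool" where
  "pD imp one \<longleftrightarrow> (\<forall>x y. imp y (imp (imp y x) x) = one)"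
definition pEx :: "('a \<Rightarrow> 'a \<Rightarrow> 'a) \<Rightarrow> 'a \<Rightarrow> bool" where
  "pEx imp one \<longleftrightarrow> (\<forall>x y z. imp x (imp y z) = imp y (imp x z))"
definition pK :: "('a \<Rightarrow> 'a \<Rightarrow> 'a) \<Rightarrow> 'a \<Rightarrow> bool" where
  "pK imp one \<longleftrightarrow> (\<forall>x y. imp x (imp y x) = one)"
definition pL :: "('a \<Rightarrow> 'a \<Rightarrow> 'a) \<Rightarrow> 'a \<Rightarrow> bool" where
  "pL imp one \<longleftrightarrow> (\<forall>x. imp x one = one)"
definition pM :: "('a \<Rightarrow> 'a \<Rightarrow> 'a) \<Rightarrow> 'a \<Rightarrow> bool" where
  "pM imp one \<longleftrightarrow> (\<forall>x. imp one x = x)"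
definition pN :: "('a \<Rightarrow> 'a \<Rightarrow> 'a) \<Rightarrow> 'a \<Rightarrow> bool" where
  "pN imp one \<longleftrightarrow> (\<forall>x. imp one x = one \<longrightarrow> x = one)"
definition pRe :: "('a \<Rightarrow> 'a \<Rightarrow> 'a) \<Rightarrow> 'a \<Rightarrow> bool" where
  "pRe imp one \<longleftrightarrow> (\<forall>x. imp x x = one)"
definition pS :: "('a \<Rightarrow> 'a \<Rightarrow> 'a) \<Rightarrow> 'a \<Rightarrow> bool" where
  "pS imp one \<longleftrightarrow> (\<forall>x y. x = y \<longrightarrow> imp x y = one)"
definition pTr :: "('a \<Rightarrow> 'a \<Rightarrow> 'a) \<Rightarrow> 'a \<Rightarrow> bool" where
  "pTr imp one \<longleftrightarrow> (\<forall>x y z. imp x y = one \<and> imp y z = one \<longrightarrow> imp x z = one)"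

end

theory Submission
  imports Defs
begin


lemma l_N_from_LAn: "pL imp one \<Longrightarrow> pAn imp one \<Longrightarrow> pN imp one"
  unfolding pL_def pAn_def pN_def by metis
lemma l_N_from_KAn: "pK imp one \<Longrightarrow> pAn imp one \<Longrightarrow> pN imp one"
  unfolding pK_def pAn_def pN_def by metis
lemma l_Ex_from_CAn: "pC imp one \<Longrightarrow> pAn imp one \<Longrightarrow> pEx imp one"
  unfolding pC_def pAn_def pEx_def by metis
lemma l_D: "pRe imp one \<Longrightarrow> pEx imp one \<Longrightarrow> pD imp one"
  unfolding pRe_def pEx_def pD_def by metis
lemma l_N5: "pRe imp one \<Longrightarrow> pEx imp one \<Longrightarrow> pAn imp one \<Longrightarrow> pN imp one"
proof -
  assume r: "pRe imp one" and e: "pEx imp one" and a: "pAn imp one"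
  show ?thesis unfolding pN_def
  proof (intro allI impI)
    fix x assume h: "imp one x = one"
    have "imp x (imp one x) = imp one (imp x x)" using e unfolding pEx_def by metis
    hence "imp x one = one" using h r unfolding pRe_def by metis
    thus "x = one" using h a unfolding pAn_def by metis
  qed
qed
lemma l_M5: "pRe imp one \<Longrightarrow> pEx imp one \<Longrightarrow> pAn imp one \<Longrightarrow> pM imp one"
proof -
  assume r: "pRe imp one" and e: "pEx imp one" and a: "pAn imp one"
  have n: "pN imp one" using l_N5 r e a .
  have d: "pD imp one" using l_D r e .
  show ?thesis unfolding pM_def
  proof
    fix x
    have 1: "imp (imp one x) x = one" using d n unfolding pD_def pN_def by metis
    have "imp x (imp one x) = imp one (imp x x)" using e unfolding pEx_def by metis
    hence 2: "imp x (imp one x) = one" using r unfolding pRe_def by metis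
    show "imp one x = x" using 1 2 a unfolding pAn_def by metis
  qed
qed
lemma l_L6: "pRe imp one \<Longrightarrow> pK imp one \<Longrightarrow> pL imp one"
  unfolding pRe_def pK_def pL_def by metis
lemma l_L7: "pN imp one \<Longrightarrow> pK imp one \<Longrightarrow> pL imp one"
  unfolding pN_def pK_def pL_def by metis
lemma l_L7': "pM imp one \<Longrightarrow> pK imp one \<Longrightarrow> pL imp one"
  unfolding pM_def pK_def pL_def by metis
lemma l_K8: "pRe imp one \<Longrightarrow> pL imp one \<Longrightarrow> pEx imp one \<Longrightarrow> pK imp one"
  unfolding pRe_def pL_def pEx_def pK_def by metis
lemma l_K9: "pM imp one \<Longrightarrow> pL imp one \<Longrightarrow> pB imp one \<Longrightarrow> pK imp one"
  unfolding pM_def pL_def pB_def pK_def by metis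
lemma l_K9': "pM imp one \<Longrightarrow> pL imp one \<Longrightarrow> pStarStar imp one \<Longrightarrow> pK imp one"
  unfolding pM_def pL_def pStarStar_def pK_def by metis
lemma l_BB10: "pEx imp one \<Longrightarrow> pB imp one \<Longrightarrow> pBB imp one"
  unfolding pEx_def pB_def pBB_def by metis
lemma l_B10: "pEx imp one \<Longrightarrow> pBB imp one \<Longrightarrow> pB imp one"
  unfolding pEx_def pB_def pBB_def by metis
lemma l_BB11: "pRe imp one \<Longrightarrow> pEx imp one \<Longrightarrow> pStar imp one \<Longrightarrow> pBB imp one"
proof -
  assume r: "pRe imp one" and e: "pEx imp one" and s: "pStar imp one"
  have d: "pD imp one" using l_D r e .
  show ?thesis unfolding pBB_def
  proof (intro allI)
    fix x y z
    have "imp z (imp (imp z x) x) = one" using d unfolding pD_def by metis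
    hence "imp (imp y z) (imp y (imp (imp z x) x)) = one" using s unfolding pStar_def by metis
    moreover have "imp y (imp (imp z x) x) = imp (imp z x) (imp y x)" using e unfolding pEx_def by metis
    ultimately show "imp (imp y z) (imp (imp z x) (imp y x)) = one" by simp
  qed
qed
lemma l_St12: "pN imp one \<Longrightarrow> pB imp one \<Longrightarrow> pStar imp one"
  unfolding pN_def pB_def pStar_def by metis
lemma l_St12': "pM imp one \<Longrightarrow> pB imp one \<Longrightarrow> pStar imp one"
  unfolding pM_def pB_def pStar_def by metis
lemma l_Tr13: "pN imp one \<Longrightarrow> pStar imp one \<Longrightarrow> pTr imp one"
  unfolding pN_def pStar_def pTr_def by metis
lemma l_Tr13': "pM imp one \<Longrightarrow> pStar imp one \<Longrightarrow> pTr imp one"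
  unfolding pM_def pStar_def pTr_def by metis
lemma l_Tr14: "pN imp one \<Longrightarrow> pB imp one \<Longrightarrow> pTr imp one"
  unfolding pN_def pB_def pTr_def by metis
lemma l_Tr14': "pM imp one \<Longrightarrow> pB imp one \<Longrightarrow> pTr imp one"
  unfolding pM_def pB_def pTr_def by metis
lemma l_SS15: "pN imp one \<Longrightarrow> pBB imp one \<Longrightarrow> pStarStar imp one"
  unfolding pN_def pBB_def pStarStar_def by metis
lemma l_SS15': "pM imp one \<Longrightarrow> pBB imp one \<Longrightarrow> pStarStar imp one"
  unfolding pM_def pBB_def pStarStar_def by metis
lemma l_Tr16: "pN imp one \<Longrightarrow> pStarStar imp one \<Longrightarrow> pTr imp one"
  unfolding pN_def pStarStar_def pTr_def by metis
lemma l_Tr16': "pM imp one \<Longrightarrow> pStarStar imp one \<Longrightarrow> pTr imp one"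
  unfolding pM_def pStarStar_def pTr_def by metis
lemma l_Tr17: "pN imp one \<Longrightarrow> pBB imp one \<Longrightarrow> pTr imp one"
  unfolding pN_def pBB_def pTr_def by metis
lemma l_Tr17': "pM imp one \<Longrightarrow> pBB imp one \<Longrightarrow> pTr imp one"
  unfolding pM_def pBB_def pTr_def by metis
lemma l_Re18: "pM imp one \<Longrightarrow> pBB imp one \<Longrightarrow> pRe imp one"
  unfolding pM_def pBB_def pRe_def by metis
lemma l_D18: "pM imp one \<Longrightarrow> pBB imp one \<Longrightarrow> pD imp one"
  unfolding pM_def pBB_def pD_def by metis
lemma l_Re19: "pM imp one \<Longrightarrow> pB imp one \<Longrightarrow> pRe imp one"
  unfolding pM_def pB_def pRe_def by metis
lemma l_C20: "pBB imp one \<Longrightarrow> pD imp one \<Longrightarrow> pN imp one \<Longrightarrow> pC imp one"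
proof -
  assume b: "pBB imp one" and d: "pD imp one" and n: "pN imp one"
  have ss: "pStarStar imp one" using l_SS15 n b .
  have tr: "pTr imp one" using l_Tr17 n b .
  show ?thesis unfolding pC_def
  proof (intro allI)
    fix x y z
    have 1: "imp (imp x (imp y z)) (imp (imp (imp y z) z) (imp x z)) = one"
      using b unfolding pBB_def by metis
    have "imp y (imp (imp y z) z) = one" using d unfolding pD_def by metis
    hence 2: "imp (imp (imp (imp y z) z) (imp x z)) (imp y (imp x z)) = one"
      using ss unfolding pStarStar_def by metis
    show "imp (imp x (imp y z)) (imp y (imp x z)) = one" using 1 2 tr unfolding pTr_def by metis
  qed
qed
lemma l_C20': "pM imp one \<Longrightarrow> pBB imp one \<Longrightarrow> pC imp one"
  using l_C20 l_D18 pM_def pN_def by metis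
lemma l_Ex21: "pBB imp one \<Longrightarrow> pD imp one \<Longrightarrow> pN imp one \<Longrightarrow> pAn imp one \<Longrightarrow> pEx imp one"
  using l_C20 l_Ex_from_CAn by metis
lemma l_Ex21': "pBB imp one \<Longrightarrow> pD imp one \<Longrightarrow> pL imp one \<Longrightarrow> pAn imp one \<Longrightarrow> pEx imp one"
  using l_Ex21 l_N_from_LAn by metis
lemma l_Ex21'': "pM imp one \<Longrightarrow> pBB imp one \<Longrightarrow> pAn imp one \<Longrightarrow> pEx imp one"
  using l_C20' l_Ex_from_CAn by metis
lemma l_Re22: "pB imp one \<Longrightarrow> pC imp one \<Longrightarrow> pK imp one \<Longrightarrow> pAn imp one \<Longrightarrow> pRe imp one"
proof -
  assume b: "pB imp one" and c: "pC imp one" and k: "pK imp one" and a: "pAn imp one"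
  have n: "pN imp one" using l_N_from_KAn k a .
  show ?thesis unfolding pRe_def
  proof
    fix x
    have "imp (imp x (imp one x)) (imp one (imp x x)) = one" using c unfolding pC_def by metis
    hence "imp one (imp one (imp x x)) = one" using k unfolding pK_def by metis
    thus "imp x x = one" using n unfolding pN_def by metis
  qed
qed
lemma l_N23: "pBB imp one \<Longrightarrow> pD imp one \<Longrightarrow> pRe imp one \<Longrightarrow> pAn imp one \<Longrightarrow> pN imp one"
  unfolding pBB_def pD_def pRe_def pAn_def pN_def by metis
lemma l_SS24: "pRe imp one \<Longrightarrow> pEx imp one \<Longrightarrow> pTr imp one \<Longrightarrow> pStarStar imp one"
proof -
  assume r: "pRe imp one" and e: "pEx imp one" and t: "pTr imp one"
  have d: "pD imp one" using l_D r e .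
  show ?thesis unfolding pStarStar_def
  proof (intro allI impI)
    fix x y z assume h: "imp y z = one"
    have "imp z (imp (imp z x) x) = one" using d unfolding pD_def by metis
    hence "imp y (imp (imp z x) x) = one" using h t unfolding pTr_def by metis
    moreover have "imp y (imp (imp z x) x) = imp (imp z x) (imp y x)" using e unfolding pEx_def by metis
    ultimately show "imp (imp z x) (imp y x) = one" by simp
  qed
qed
lemma l_S0: "pRe imp one \<Longrightarrow> pS imp one"
  unfolding pRe_def pS_def by metis
lemma l_N00: "pM imp one \<Longrightarrow> pN imp one"
  unfolding pM_def pN_def by metis
lemma l_C3': "pEx imp one \<Longrightarrow> pRe imp one \<Longrightarrow> pC imp one"
  unfolding pEx_def pRe_def pC_def by metis

theorem proposition2p1:
  fixes imp :: "'a \<Rightarrow> 'a \<Rightarrow> 'a" and one :: 'a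
  shows
   "(pRe imp one \<longrightarrow> pS imp one) \<and>
    (pM imp one \<longrightarrow> pN imp one) \<and>
    (pL imp one \<and> pAn imp one \<longrightarrow> pN imp one) \<and>
    (pK imp one \<and> pAn imp one \<longrightarrow> pN imp one) \<and>
    (pC imp one \<and> pAn imp one \<longrightarrow> pEx imp one) \<and>
    (pEx imp one \<and> pRe imp one \<longrightarrow> pC imp one) \<and>
    (pRe imp one \<and> pEx imp one \<longrightarrow> pD imp one) \<and>
    (pRe imp one \<and> pEx imp one \<and> pAn imp one \<longrightarrow> pM imp one) \<and>
    (pRe imp one \<and> pEx imp one \<and> pAn imp one \<longrightarrow> pN imp one) \<and>
    (pRe imp one \<and> pK imp one \<longrightarrow> pL imp one) \<and>
    (pN imp one \<and> pK imp one \<longrightarrow> pL imp one) \<and>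
    (pM imp one \<and> pK imp one \<longrightarrow> pL imp one) \<and>
    (pRe imp one \<and> pL imp one \<and> pEx imp one \<longrightarrow> pK imp one) \<and>
    (pM imp one \<and> pL imp one \<and> pB imp one \<longrightarrow> pK imp one) \<and>
    (pM imp one \<and> pL imp one \<and> pStarStar imp one \<longrightarrow> pK imp one) \<and>
    (pEx imp one \<longrightarrow> (pB imp one \<longleftrightarrow> pBB imp one)) \<and>
    (pEx imp one \<and> pB imp one \<longrightarrow> pBB imp one) \<and>
    (pEx imp one \<and> pBB imp one \<longrightarrow> pB imp one) \<and>
    (pRe imp one \<and> pEx imp one \<and> pStar imp one \<longrightarrow> pBB imp one) \<and>
    (pN imp one \<and> pB imp one \<longrightarrow> pStar imp one) \<and>
    (pM imp one \<and> pB imp one \<longrightarrow> pStar imp one) \<and>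
    (pN imp one \<and> pStar imp one \<longrightarrow> pTr imp one) \<and>
    (pM imp one \<and> pStar imp one \<longrightarrow> pTr imp one) \<and>
    (pN imp one \<and> pB imp one \<longrightarrow> pTr imp one) \<and>
    (pM imp one \<and> pB imp one \<longrightarrow> pTr imp one) \<and>
    (pN imp one \<and> pBB imp one \<longrightarrow> pStarStar imp one) \<and>
    (pM imp one \<and> pBB imp one \<longrightarrow> pStarStar imp one) \<and>
    (pN imp one \<and> pStarStar imp one \<longrightarrow> pTr imp one) \<and>
    (pM imp one \<and> pStarStar imp one \<longrightarrow> pTr imp one) \<and>
    (pN imp one \<and> pBB imp one \<longrightarrow> pTr imp one) \<and>
    (pM imp one \<and> pBB imp one \<longrightarrow> pTr imp one) \<and>
    (pM imp one \<and> pBB imp one \<longrightarrow> pRe imp one) \<and>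
    (pM imp one \<and> pBB imp one \<longrightarrow> pD imp one) \<and>
    (pM imp one \<and> pB imp one \<longrightarrow> pRe imp one) \<and>
    (pBB imp one \<and> pD imp one \<and> pN imp one \<longrightarrow> pC imp one) \<and>
    (pM imp one \<and> pBB imp one \<longrightarrow> pC imp one) \<and>
    (pBB imp one \<and> pD imp one \<and> pN imp one \<and> pAn imp one \<longrightarrow> pEx imp one) \<and>
    (pBB imp one \<and> pD imp one \<and> pL imp one \<and> pAn imp one \<longrightarrow> pEx imp one) \<and>
    (pM imp one \<and> pBB imp one \<and> pAn imp one \<longrightarrow> pEx imp one) \<and>
    (pB imp one \<and> pC imp one \<and> pK imp one \<and> pAn imp one \<longrightarrow> pRe imp one) \<and>
    (pBB imp one \<and> pD imp one \<and> pRe imp one \<and> pAn imp one \<longrightarrow> pN imp one) \<and>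
    (pRe imp one \<and> pEx imp one \<and> pTr imp one \<longrightarrow> pStarStar imp one)"
  
  apply (intro conjI impI iffI; (elim conjE)?)
  by (blast intro: l_N_from_LAn l_N_from_KAn l_Ex_from_CAn l_D l_N5 l_M5 l_L6 l_L7 l_L7' l_K8 l_K9 l_K9'
    l_BB10 l_B10 l_BB11 l_St12 l_St12' l_Tr13 l_Tr13' l_Tr14 l_Tr14' l_SS15 l_SS15' l_Tr16 l_Tr16'
    l_Tr17 l_Tr17' l_Re18 l_D18 l_Re19 l_C20 l_C20' l_Ex21 l_Ex21' l_Ex21'' l_Re22 l_N23 l_SS24 l_S0 l_N00 l_C3')+

end
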